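(* Let $\tau_i\in\tau_H$ be a HI-task in the multi-rate fluid model with earliest completion window $k_i$. If $$\sum_{j:1\le j<k_i}\theta_{i,j}^H w_j\ \ge\ u_i^H\sum_{j:1\le j<k_i}w_j,\qquad \forall j:1\le j<k_i,\ \theta_{i,j}^H\le\theta_{i,j+1}^H,$$ $$\forall j:k_i\le j\le n_H,\ \theta_{i,j}^H\ge u_i^H,\qquad\text{and}\qquad \theta_i^H\ge u_i^H,$$ then every early transition job of $\tau_i$ meets its deadline in the HI-mode (receives $C_i^H$ units of execution by its deadline).
   Context: A dual-criticality implicit-deadline sporadic task system runs on $m$ identical processors. Each task $\tau_i$ has period and relative deadline $T_i>0$, criticality in $\{LO,HI\}$, and WCETs $C_i^L\le C_i^H$; $u_i^L=C_i^L/T_i\le1$, $u_i^H=C_i^H/T_i\le1$; $n_H$ is the number of HI-tasks. The system starts in LO-mode; the mode switch is the first instant a HI-task job $\tau_i$ has executed $C_i^L$ units without completing; afterwards (HI-mode) LO-task jobs are dropped and HI jobs need up to $C_i^H$ units by their deadlines. Multi-rate fluid model (rate $\theta$ = receiving $\theta\ell$ units of execution in any interval of length $\ell$): in LO-mode each job of $\tau_i$ executes at rate $\theta_i^L\in(0,1]$; with time measured from the mode switch, the transition period $[0,\sum_{j=1}^{n_H}w_j)$ is divided into consecutive windows of durations $w_1,\dots,w_{n_H}\ge0$, window $j$ being $[\sum_{l<j}w_l,\sum_{l\le j}w_l)$, in which each job of HI-task $\tau_i$ executes at rate $\theta_{i,j}^H\in[0,1]$; after the transition period at rate $\theta_i^H\in(0,1]$.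 By convention $\theta_{i,n_H+1}^H$ denotes $\theta_i^H$. The earliest completion window of $\tau_i$ is the largest index $k_i\in\{1,\dots,n_H+1\}$ with $\sum_{j:1\le j<k_i}w_j<T_i-C_i^L/\theta_i^L$. An early transition job of $\tau_i$ is a job of $\tau_i$ released after the mode switch at a time $t<\sum_{j:1\le j<k_i}w_j$ (relative to the mode switch). *)

theory Defs
  imports Complex_Main
begin

text \<open>Time is measured from the mode switch. Windows are indexed 1..nH with
  durations w j; window j is the interval [win_start w j, win_start w (j+1)).\<close>

definition win_start :: "(nat \<Rightarrow> real) \<Rightarrow> nat \<Rightarrow> real" where
  "win_start w j = (\<Sum>l\<in>{1..<j}. w l)"

definition overlap :: "real \<Rightarrow> real \<Rightarrow> real \<Rightarrow> real \<Rightarrow> real" where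
  "overlap a b c d = max 0 (min b d - max a c)"

text \<open>Execution received (multi-rate fluid model, HI-mode) by a job of the HI-task
  in the interval [a,b) (times relative to the mode switch, a \<ge> 0): rate theta j in
  window j (1 \<le> j \<le> nH), rate thetaH after the transition period.\<close>
definition exec_HI :: "nat \<Rightarrow> (nat \<Rightarrow> real) \<Rightarrow> (nat \<Rightarrow> real) \<Rightarrow> real \<Rightarrow> real \<Rightarrow> real \<Rightarrow> real" where
  "exec_HI nH w theta thetaH a b =
     (\<Sum>j\<in>{1..nH}. theta j * overlap a b (win_start w j) (win_start w (j+1)))
     + thetaH * max 0 (b - max a (win_start w (nH+1)))"

text \<open>Convention: theta_{i,nH+1} denotes theta_i^H.\<close>
definition theta_ext :: "nat \<Rightarrow> (nat \<Rightarrow> real) \<Rightarrow> real \<Rightarrow> nat \<Rightarrow> real" where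
  "theta_ext nH theta thetaH j = (if j = nH + 1 then thetaH else theta j)"

definition earliest_completion_window ::
  "nat \<Rightarrow> (nat \<Rightarrow> real) \<Rightarrow> real \<Rightarrow> real \<Rightarrow> real \<Rightarrow> nat \<Rightarrow> bool" where
  "earliest_completion_window nH w T CL thetaL k \<longleftrightarrow>
     k \<in> {1..nH+1} \<and> (\<Sum>j\<in>{1..<k}. w j) < T - CL / thetaL \<and>
     (\<forall>k'\<in>{1..nH+1}. (\<Sum>j\<in>{1..<k'}. w j) < T - CL / thetaL \<longrightarrow> k' \<le> k)"

end

theory Submission imports Defs begin

lemma win_start_Suc: "win_start w (Suc m) = win_start w m + (if 1 \<le> m then w m else 0)"
  unfolding win_start_def by (cases "m = 0") (auto simp: sum.atLeastLessThan_Suc)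

lemma win_start_mono:
  assumes "\<forall>j\<in>{1..n}. 0 \<le> w j" "i \<le> j" "j \<le> n + 1"
  shows "win_start w i \<le> win_start w j"
  using assms(2,3)
proof (induction j rule: dec_induct)
  case base then show ?case by simp
next
  case (step m)
  then have "m \<le> n" by simp
  then have "1 \<le> m \<longrightarrow> 0 \<le> w m" using assms(1) by auto
  then show ?case using step by (auto simp: win_start_Suc)
qed

lemma ov_step: "c \<le> d \<Longrightarrow> overlap a b c d + max 0 (b - max a d) = max 0 (b - max a c)"
  unfolding overlap_def by (auto simp: max_def min_def)

lemma partition:
  assumes "\<forall>j\<in>{1..N}. 0 \<le> w j" "a \<le> b" "0 \<le> a" "n \<le> N"
  shows "(\<Sum>j\<in>{1..n}. overlap a b (win_start w j) (win_start w (j+1)))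
         + max 0 (b - max a (win_start w (n+1))) = b - a"
  using assms(4)
proof (induction n)
  case 0 then show ?case using assms by (simp add: win_start_def)
next
  case (Suc n)
  have "win_start w (Suc n) \<le> win_start w (Suc n + 1)"
    using Suc.prems assms(1) by (simp add: win_start_Suc)
  then have "overlap a b (win_start w (Suc n)) (win_start w (Suc n + 1))
     + max 0 (b - max a (win_start w (Suc n + 1))) = max 0 (b - max a (win_start w (n + 1)))"
    using ov_step by simp
  then show ?case using Suc by (simp add: algebra_simps)
qed

lemma threshold:
  fixes th x w :: "nat \<Rightarrow> real"
  assumes "finite A" "\<forall>j\<in>A. 0 \<le> x j \<and> x j \<le> w j"
    "(\<Sum>j\<in>A. th j * w j) \<ge> u * (\<Sum>j\<in>A. w j)"
    "\<forall>j\<in>A. x j > 0 \<longrightarrow> th j \<ge> c"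
    "\<forall>j\<in>A. x j < w j \<longrightarrow> th j \<le> c"
  shows "(\<Sum>j\<in>A. th j * x j) \<ge> u * (\<Sum>j\<in>A. x j)"
proof (cases "c \<ge> u")
  case True
  have "\<forall>j\<in>A. th j * x j \<ge> u * x j"
  proof
    fix j assume j: "j \<in> A"
    show "th j * x j \<ge> u * x j"
    proof (cases "x j > 0")
      case True then show ?thesis using j assms(4) \<open>c \<ge> u\<close> by (intro mult_right_mono) auto
    next
      case False then have "x j = 0" using j assms(2) by force
      then show ?thesis by simp
    qed
  qed
  then show ?thesis by (simp add: sum_distrib_left sum_mono)
next
  case False
  have "\<forall>j\<in>A. th j * (w j - x j) \<le> u * (w j - x j)"
  proof
    fix j assume j: "j \<in> A"
    show "th j * (w j - x j) \<le> u * (w j - x j)"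
    proof (cases "x j < w j")
      case True then show ?thesis using j assms(5) False by (intro mult_right_mono) auto
    next
      case False then have "x j = w j" using j assms(2) by force
      then show ?thesis by simp
    qed
  qed
  then have "(\<Sum>j\<in>A. th j * (w j - x j)) \<le> u * (\<Sum>j\<in>A. (w j - x j))"
    by (simp add: sum_distrib_left sum_mono)
  then show ?thesis using assms(3)
    by (simp add: sum_subtractf right_diff_distrib algebra_simps)
qed

theorem theorem2:
  fixes nH :: nat and w theta :: "nat \<Rightarrow> real"
    and T CL CH thetaL thetaH :: real and k :: nat
  assumes T_pos: "T > 0"
    and CL_nonneg: "0 \<le> CL" and CL_le_CH: "CL \<le> CH"
    and uL_le1: "CL / T \<le> 1" and uH_le1: "CH / T \<le> 1"
    and thetaL: "0 < thetaL" "thetaL \<le> 1"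
    and thetaH: "0 < thetaH" "thetaH \<le> 1"
    and theta_rng: "\<forall>j\<in>{1..nH}. 0 \<le> theta j \<and> theta j \<le> 1"
    and w_nonneg: "\<forall>j\<in>{1..nH}. 0 \<le> w j"
    and ecw: "earliest_completion_window nH w T CL thetaL k"
    and c1: "(\<Sum>j\<in>{1..<k}. theta j * w j) \<ge> (CH / T) * (\<Sum>j\<in>{1..<k}. w j)"
    and c2: "\<forall>j. 1 \<le> j \<and> j < k \<longrightarrow> theta_ext nH theta thetaH j \<le> theta_ext nH theta thetaH (j+1)"
    and c3: "\<forall>j. k \<le> j \<and> j \<le> nH \<longrightarrow> theta j \<ge> CH / T"
    and c4: "thetaH \<ge> CH / T"
  shows "\<forall>t. 0 \<le> t \<and> t < (\<Sum>j\<in>{1..<k}. w j) \<longrightarrow>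
           exec_HI nH w theta thetaH t (t + T) \<ge> CH"
proof (intro allI impI)
  fix t assume t: "0 \<le> t \<and> t < (\<Sum>j\<in>{1..<k}. w j)"
  define S where "S = win_start w"
  define u where "u = CH / T"
  define Ov where "Ov j = overlap t (t+T) (S j) (S (j+1))" for j
  define x where "x j = max 0 (S (j+1) - max t (S j))" for j
  define tal where "tal = max 0 (t + T - max t (S (nH+1)))"
  have k: "1 \<le> k" "k \<le> nH + 1" and Sk: "S k < T - CL / thetaL"
    using ecw unfolding earliest_completion_window_def S_def win_start_def by auto
  have "CL / thetaL \<ge> 0" using CL_nonneg thetaL by simp
  with Sk have SkT: "S k < T" by linarith
  have tS: "0 \<le> t" "t < S k" using t unfolding S_def win_start_def by auto
  have mono: "S i \<le> S j" if "i \<le> j" "j \<le> nH + 1" for i j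
    using win_start_mono[OF w_nonneg that] unfolding S_def .
  have Ssuc: "S (j+1) = S j + w j" if "1 \<le> j" for j
    using that by (simp add: S_def win_start_Suc)
  have Ox: "Ov j = x j" if "j \<in> {1..<k}" for j
  proof -
    have "S (j+1) \<le> S k" using that k by (intro mono) auto
    then show ?thesis using SkT tS unfolding Ov_def x_def overlap_def by (auto simp: max_def min_def)
  qed
  have xw: "\<forall>j\<in>{1..<k}. 0 \<le> x j \<and> x j \<le> w j"
  proof
    fix j assume j: "j \<in> {1..<k}"
    have "0 \<le> w j" using j k w_nonneg by auto
    then show "0 \<le> x j \<and> x j \<le> w j" using Ssuc[of j] j unfolding x_def by (auto simp: max_def)
  qed
  have thmono: "theta i \<le> theta j" if "1 \<le> i" "i \<le> j" "j < k" for i j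
    using that(2,3)
  proof (induction j rule: dec_induct)
    case base then show ?case by simp
  next
    case (step m)
    have "theta_ext nH theta thetaH m \<le> theta_ext nH theta thetaH (m+1)"
      using c2 step that(1) by auto
    then have "theta m \<le> theta (m+1)" using step k unfolding theta_ext_def by (auto split: if_splits)
    then show ?case using step by simp
  qed
  define B where "B = {j \<in> {1..<k}. t < S (j+1)}"
  have k2: "2 \<le> k"
  proof (rule ccontr)
    assume "\<not> 2 \<le> k" then have "k = 1" using k by simp
    then show False using tS unfolding S_def win_start_def by simp
  qed
  have "k - 1 \<in> B" using k2 tS unfolding B_def by auto
  then have Bne: "B \<noteq> {}" by auto
  have Bfin: "finite B" unfolding B_def by simp
  define c where "c = Min (theta ` B)"
  have thr: "(\<Sum>j\<in>{1..<k}. theta j * x j) \<ge> u * (\<Sum>j\<in>{1..<k}. x j)"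
  proof (rule threshold[where c = c])
    show "finite {1..<k}" by simp
    show "\<forall>j\<in>{1..<k}. 0 \<le> x j \<and> x j \<le> w j" by (rule xw)
    show "u * (\<Sum>j\<in>{1..<k}. w j) \<le> (\<Sum>j\<in>{1..<k}. theta j * w j)" using c1 u_def by simp
    show "\<forall>j\<in>{1..<k}. 0 < x j \<longrightarrow> c \<le> theta j"
    proof (intro ballI impI)
      fix j assume j: "j \<in> {1..<k}" "0 < x j"
      then have "j \<in> B" unfolding B_def x_def by (auto simp: max_def split: if_splits)
      then show "c \<le> theta j" unfolding c_def using Bfin by simp
    qed
    show "\<forall>j\<in>{1..<k}. x j < w j \<longrightarrow> theta j \<le> c"
    proof (intro ballI impI)
      fix j assume j: "j \<in> {1..<k}" "x j < w j"
      have Sj: "S j < t"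
      proof (rule ccontr)
        assume "\<not> S j < t"
        moreover have "0 \<le> w j" using j k w_nonneg by auto
        ultimately have "x j = w j" using Ssuc[of j] j unfolding x_def by (auto simp: max_def)
        then show False using j by simp
      qed
      have "\<forall>i\<in>B. theta j \<le> theta i"
      proof
        fix i assume i: "i \<in> B"
        have "j \<le> i"
        proof (rule ccontr)
          assume "\<not> j \<le> i"
          then have "S (i+1) \<le> S j" using j k by (intro mono) auto
          then show False using i Sj unfolding B_def by auto
        qed
        then show "theta j \<le> theta i" using thmono j i unfolding B_def by auto
      qed
      then show "theta j \<le> c" unfolding c_def using Bfin Bne by simp
    qed
  qed
  have part: "(\<Sum>j\<in>{1..nH}. Ov j) + tal = T"
    using partition[OF w_nonneg, of t "t+T" nH] T_pos tS unfolding Ov_def tal_def S_def by simp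
  have Onn: "Ov j \<ge> 0" for j unfolding Ov_def overlap_def by simp
  have split: "{1..nH} = {1..<k} \<union> {k..nH}" using k by auto
  have disj: "{1..<k} \<inter> {k..nH} = {}" by auto
  have e: "exec_HI nH w theta thetaH t (t + T)
     = (\<Sum>j\<in>{1..<k}. theta j * Ov j) + (\<Sum>j\<in>{k..nH}. theta j * Ov j) + thetaH * tal"
    unfolding exec_HI_def Ov_def tal_def S_def split
    by (subst sum.union_disjoint) (auto)
  have "(\<Sum>j\<in>{1..<k}. theta j * Ov j) = (\<Sum>j\<in>{1..<k}. theta j * x j)"
    using Ox by simp
  moreover have "(\<Sum>j\<in>{1..<k}. Ov j) = (\<Sum>j\<in>{1..<k}. x j)"
    using Ox by simp
  moreover have "(\<Sum>j\<in>{k..nH}. theta j * Ov j) \<ge> u * (\<Sum>j\<in>{k..nH}. Ov j)"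
    unfolding sum_distrib_left
  proof (rule sum_mono)
    fix j assume "j \<in> {k..nH}"
    then have "u \<le> theta j" using c3 u_def by auto
    then show "u * Ov j \<le> theta j * Ov j" using Onn[of j] by (rule mult_right_mono)
  qed
  moreover have "thetaH * tal \<ge> u * tal"
    using c4 u_def by (intro mult_right_mono) (auto simp: tal_def)
  moreover have "(\<Sum>j\<in>{1..nH}. Ov j) = (\<Sum>j\<in>{1..<k}. Ov j) + (\<Sum>j\<in>{k..nH}. Ov j)"
    unfolding split by (rule sum.union_disjoint) auto
  ultimately have "exec_HI nH w theta thetaH t (t + T) \<ge> u * T"
  proof -
    assume a: "(\<Sum>j\<in>{1..<k}. theta j * Ov j) = (\<Sum>j\<in>{1..<k}. theta j * x j)"
      "(\<Sum>j\<in>{1..<k}. Ov j) = (\<Sum>j\<in>{1..<k}. x j)"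
      "(\<Sum>j\<in>{k..nH}. theta j * Ov j) \<ge> u * (\<Sum>j\<in>{k..nH}. Ov j)"
      "thetaH * tal \<ge> u * tal"
      "(\<Sum>j\<in>{1..nH}. Ov j) = (\<Sum>j\<in>{1..<k}. Ov j) + (\<Sum>j\<in>{k..nH}. Ov j)"
    have "u * T = u * (\<Sum>j\<in>{1..<k}. x j) + u * (\<Sum>j\<in>{k..nH}. Ov j) + u * tal"
    proof -
      have "T = (\<Sum>j\<in>{1..<k}. x j) + (\<Sum>j\<in>{k..nH}. Ov j) + tal"
        using part a(2,5) by linarith
      then show ?thesis by (simp add: distrib_left)
    qed
    then show ?thesis using a e thr by linarith
  qed
  then show "exec_HI nH w theta thetaH t (t + T) \<ge> CH" using T_pos u_def by simp
qed

end
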